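(* Let $\mathcal{X}=\mathbb{R}^{d_\mathcal{X}}$, $\Theta=\mathbb{R}^{d_\Theta}$, $\beta>0$, observations $x^o_1,\dots,x^o_n$, and Gaussian prior $\pi(\theta)\propto\mathcal{N}(\theta;\mu,\Sigma)$ with $\Sigma$ positive definite. Suppose: (A1) $w:\mathcal{X}\to\mathbb{R}_+$ is twice continuously differentiable with $\sup_xw(x)<\infty$ and $\sup_x\|\nabla_xw(x)\|_2<\infty$; (A3) $q(x\mid\theta)\propto\exp(T(x)^\top\theta+b(x))$ with $T:\mathcal{X}\to\mathbb{R}^{d_\Theta}$, $b:\mathcal{X}\to\mathbb{R}$ twice differentiable and $q(\cdot\mid\theta)$ a probability density for each $\theta$; (A5) there exist $C,C'<\infty$ such that for all $x\in\mathcal{X}$, $$\max\Big\{\big(\|\nabla_xT(x)\|_F\|\nabla_xb(x)\|_2\big)^{1/2},\ \|\nabla_x^2T(x)\|_F^{1/2},\ \|\nabla_xT(x)\|_F\Big\}\le C\,w(x)^{-1},\qquad \|\nabla_xT(x)\|_F\le C'\|\nabla_xw(x)^2\|_2^{-1}.$$ Fix $j\in\{1,\dots,n\}$ and for $x_j^c\in\mathcal{X}$ let $x^c_{1:n}$ be the dataset obtained from $x^o_{1:n}$ by replacing $x_j^o$ with $x_j^c$. Then $$\sup_{x_j^c\in\mathbb{R}^{d_\mathcal{X}}}\mathrm{KL}\Big(\pi_{\mathrm{NSM}}(\cdot\mid x^o_{1:n})\,\Big\|\,\pi_{\mathrm{NSM}}(\cdot\mid x^c_{1:n})\Big)<\i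nfty.$$
   Context: $\nabla_xT(x)\in\mathbb{R}^{d_\Theta\times d_\mathcal{X}}$ has entries $\partial T_k/\partial x_j$; $\nabla_x^2T(x)$ is the array of all second derivatives $\partial^2T_k/\partial x_j\partial x_l$; $\|\cdot\|_F$ is the Frobenius (square root of sum of squared entries) norm; $\nabla_xw(x)^2$ is the gradient of $x\mapsto w(x)^2$; $1/0=\infty$. For any dataset $y_{1:n}$, the NSM-Bayes posterior is $\pi_{\mathrm{NSM}}(\theta\mid y_{1:n})\propto\exp(-\beta n\mathcal{L}_{\mathrm{NSM}}(\theta;y_{1:n}))\pi(\theta)$ with $$\mathcal{L}_{\mathrm{NSM}}(\theta;y_{1:n})=\frac1n\sum_{i=1}^n\Big[w(y_i)^2\|\nabla_x\log q(y_i\mid\theta)\|_2^2+2(\nabla_xw(y_i)^2)^\top\nabla_x\log q(y_i\mid\theta)+2w(y_i)^2\mathrm{Tr}\,\nabla_x^2\log q(y_i\mid\theta)\Big].$$ Under (A3) and the Gaussian prior this posterior is Gaussian, $\mathcal{N}(\theta;\mu_n,\Sigma_n)$, with $\Sigma_n^{-1}=\Sigma^{-1}+2\beta\sum_i w(y_i)^2\nabla_xT(y_i)\nabla_xT(y_i)^\top$ and $\mu_n=\Sigma_n(\Sigma^{-1}\mu-2\beta\sum_i[w(y_i)^2\nabla_xT(y_i)\nabla_xb(y_i)+d(y_i)])$, where $d(y)_k=\sum_{j}\partial_{x_j}(w(y)^2\partial T_k(y)/\partial x_j)$. *)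

theory Defs
  imports "HOL-Analysis.Analysis"
begin

definition pd :: "'n::finite \<Rightarrow> (real^'n \<Rightarrow> real) \<Rightarrow> real^'n \<Rightarrow> real" where
  "pd j f x = deriv (\<lambda>t. f (x + t *\<^sub>R axis j 1)) 0"

text \<open>Gradient (Euclidean norm of a real^'n is the 2-norm).\<close>
definition grad :: "(real^'n::finite \<Rightarrow> real) \<Rightarrow> real^'n \<Rightarrow> real^'n" where
  "grad f x = (\<chi> j. pd j f x)"

text \<open>Jacobian nabla_x T(x), entries dT_k/dx_j; the norm on real^'n^'m is the Frobenius norm.\<close>
definition jac :: "(real^'n::finite \<Rightarrow> real^'m::finite) \<Rightarrow> real^'n \<Rightarrow> real^'n^'m" where
  "jac T x = (\<chi> k j. pd j (\<lambda>y. T y $ k) x)"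

text \<open>Array of second derivatives d^2 T_k / dx_j dx_l; norm = Frobenius norm.\<close>
definition hess_arr :: "(real^'n::finite \<Rightarrow> real^'m::finite) \<Rightarrow> real^'n \<Rightarrow> real^'n^'n^'m" where
  "hess_arr T x = (\<chi> k j l. pd l (\<lambda>y. pd j (\<lambda>z. T z $ k) y) x)"

definition lap :: "(real^'n::finite \<Rightarrow> real) \<Rightarrow> real^'n \<Rightarrow> real" where
  "lap f x = (\<Sum>j\<in>UNIV. pd j (pd j f) x)"

definition twice_differentiable :: "(real^'n::finite \<Rightarrow> real) \<Rightarrow> bool" where
  "twice_differentiable f \<longleftrightarrow> (\<forall>x. f differentiable at x) \<and> (\<forall>j x. pd j f differentiable at x)"

definition twice_cont_differentiable :: "(real^'n::finite \<Rightarrow> real) \<Rightarrow> bool" where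
  "twice_cont_differentiable f \<longleftrightarrow> twice_differentiable f \<and>
     (\<forall>i j. continuous_on UNIV (pd i (pd j f)))"

definition twice_differentiable_vec :: "(real^'n::finite \<Rightarrow> real^'m::finite) \<Rightarrow> bool" where
  "twice_differentiable_vec T \<longleftrightarrow> (\<forall>x. T differentiable at x) \<and>
     (\<forall>k. twice_differentiable (\<lambda>x. T x $ k))"

definition expfam :: "(real^'n::finite \<Rightarrow> real^'m::finite) \<Rightarrow> (real^'n \<Rightarrow> real) \<Rightarrow> real^'m \<Rightarrow> real^'n \<Rightarrow> real" where
  "expfam T b \<theta> x = exp (T x \<bullet> \<theta> + b x) / (\<integral>y. exp (T y \<bullet> \<theta> + b y) \<partial>lborel)"

definition L_NSM :: "(real^'n::finite \<Rightarrow> real) \<Rightarrow> (real^'m::finite \<Rightarrow> real^'n \<Rightarrow> real)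
    \<Rightarrow> nat \<Rightarrow> (nat \<Rightarrow> real^'n) \<Rightarrow> real^'m \<Rightarrow> real" where
  "L_NSM w q n ys \<theta> = (1 / real n) * (\<Sum>i=1..n.
      (w (ys i))^2 * (norm (grad (\<lambda>x. ln (q \<theta> x)) (ys i)))^2
    + 2 * (grad (\<lambda>x. (w x)^2) (ys i) \<bullet> grad (\<lambda>x. ln (q \<theta> x)) (ys i))
    + 2 * (w (ys i))^2 * lap (\<lambda>x. ln (q \<theta> x)) (ys i))"

definition gauss_unnorm :: "real^'m::finite \<Rightarrow> real^'m^'m \<Rightarrow> real^'m \<Rightarrow> real" where
  "gauss_unnorm \<mu> \<Sigma> \<theta> = exp (-(1/2) * ((\<theta> - \<mu>) \<bullet> (matrix_inv \<Sigma> *v (\<theta> - \<mu>))))"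

definition pos_def :: "real^'m::finite^'m \<Rightarrow> bool" where
  "pos_def A \<longleftrightarrow> transpose A = A \<and> (\<forall>v. v \<noteq> 0 \<longrightarrow> v \<bullet> (A *v v) > 0)"

definition post_NSM :: "real \<Rightarrow> (real^'n::finite \<Rightarrow> real) \<Rightarrow> (real^'m::finite \<Rightarrow> real^'n \<Rightarrow> real)
    \<Rightarrow> real^'m \<Rightarrow> real^'m^'m \<Rightarrow> nat \<Rightarrow> (nat \<Rightarrow> real^'n) \<Rightarrow> real^'m \<Rightarrow> real" where
  "post_NSM \<beta> w q \<mu> \<Sigma> n ys \<theta> =
     exp (- \<beta> * real n * L_NSM w q n ys \<theta>) * gauss_unnorm \<mu> \<Sigma> \<theta> /
     (\<integral>\<phi>. exp (- \<beta> * real n * L_NSM w q n ys \<phi>) * gauss_unnorm \<mu> \<Sigma> \<phi> \<partial>lborel)"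

definition KL :: "(real^'m::finite \<Rightarrow> real) \<Rightarrow> (real^'m \<Rightarrow> real) \<Rightarrow> ereal" where
  "KL p p' = (if integrable lborel (\<lambda>\<theta>. p \<theta> * ln (p \<theta> / p' \<theta>))
              then ereal (\<integral>\<theta>. p \<theta> * ln (p \<theta> / p' \<theta>) \<partial>lborel) else \<infinity>)"

end

theory Submission
  imports Defs "HOL-Probability.Distributions"
begin

lemma gauss1_int:
  fixes a :: real assumes a: "a > 0"
  shows "integrable lborel (\<lambda>x::real. exp (- a * x\<^sup>2))"
proof -
  define s where "s = 1 / sqrt (2 * a)"
  have s: "s > 0" using a by (simp add: s_def)
  have ss: "2 * s\<^sup>2 = 1 / a" using a by (simp add: s_def power_divide)
  have "integrable lborel (\<lambda>x. sqrt (2 * pi * s\<^sup>2) * normal_density 0 s x)"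
    by (intro integrable_mult_right integrable_normal_density) (use s in simp)
  also have "(\<lambda>x. sqrt (2 * pi * s\<^sup>2) * normal_density 0 s x) = (\<lambda>x::real. exp (- a * x\<^sup>2))"
    using s a ss by (auto simp: normal_density_def field_simps)
  finally show ?thesis .
qed

lemma gauss_int:
  fixes a :: real assumes a: "a > 0"
  shows "integrable lborel (\<lambda>x::'a::euclidean_space. exp (- a * (norm x)\<^sup>2))"
proof (rule integrableI_nonneg)
  show "(\<lambda>x::'a. exp (- a * (norm x)\<^sup>2)) \<in> borel_measurable lborel" by measurable
  show "AE x in lborel. 0 \<le> exp (- a * (norm (x::'a))\<^sup>2)" by simp
  have eq: "\<And>x::'a. exp (- a * (norm x)\<^sup>2) = (\<Prod>b\<in>Basis. exp (- a * (x \<bullet> b)\<^sup>2))"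
  proof -
    fix x :: 'a
    have "(norm x)\<^sup>2 = (\<Sum>b\<in>Basis. (x \<bullet> b)\<^sup>2)"
      unfolding power2_norm_eq_inner by (subst euclidean_inner) (simp add: power2_eq_square)
    then show "exp (- a * (norm x)\<^sup>2) = (\<Prod>b\<in>Basis. exp (- a * (x \<bullet> b)\<^sup>2))"
      by (simp add: sum_distrib_left exp_sum[symmetric] sum_negf)
  qed
  have fin: "(\<integral>\<^sup>+x. ennreal (exp (- a * x\<^sup>2)) \<partial>lborel) < \<infinity>"
    using gauss1_int[OF a] by (simp add: integrable_iff_bounded)
  have "(\<integral>\<^sup>+x. ennreal (exp (- a * (norm (x::'a))\<^sup>2)) \<partial>lborel)
      = (\<integral>\<^sup>+x. (\<Prod>b\<in>(Basis::'a set). ennreal (exp (- a * (x \<bullet> b)\<^sup>2))) \<partial>lborel)"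
    unfolding eq by (simp add: prod_ennreal)
  also have "\<dots> = (\<Prod>b\<in>(Basis::'a set). (\<integral>\<^sup>+x. ennreal (exp (- a * x\<^sup>2)) \<partial>lborel))"
    by (rule nn_integral_lborel_prod) auto
  also have "\<dots> < \<infinity>"
    using fin by (simp add: less_top[symmetric] ennreal_prod_eq_top power_eq_top_ennreal)
  finally show "(\<integral>\<^sup>+x. ennreal (exp (- a * (norm (x::'a))\<^sup>2)) \<partial>lborel) < \<infinity>" .
qed

lemma poly_le_exp:
  fixes t :: real assumes "t \<ge> 0"
  shows "1 + t + t\<^sup>2 \<le> 6 * exp t"
proof -
  have e1: "1 + t \<le> exp t" by simp
  have "1 + t/2 \<le> exp (t/2)" by (rule exp_ge_add_one_self)
  then have "(1 + t/2)\<^sup>2 \<le> (exp (t/2))\<^sup>2" using assms by (intro power_mono) auto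
  also have "(exp (t/2))\<^sup>2 = exp t" by (simp add: power2_eq_square exp_add[symmetric])
  finally have "t\<^sup>2 \<le> 4 * exp t" using assms by (simp add: power2_eq_square field_simps)
  then show ?thesis using e1 exp_gt_zero[of t] by linarith
qed

lemma quad_bound:
  fixes t L a :: real assumes "a > 0"
  shows "L * t - a * t\<^sup>2 \<le> L\<^sup>2 / (2 * a) - (a / 2) * t\<^sup>2"
proof -
  have "0 \<le> (L - a * t)\<^sup>2 / (2 * a)" using assms by simp
  then show ?thesis using assms by (simp add: power2_eq_square field_simps)
qed

lemma dom_int:
  fixes a K :: real assumes a: "a > 0"
  shows "integrable lborel (\<lambda>x::'a::euclidean_space. (1 + norm x + (norm x)\<^sup>2) * exp (K * norm x - a * (norm x)\<^sup>2))"
proof -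
  define L where "L = \<bar>K\<bar> + 1"
  have i: "integrable lborel (\<lambda>x::'a. (6 * exp (L\<^sup>2 / (2 * a))) * exp (- (a/2) * (norm x)\<^sup>2))"
    using a by (intro integrable_mult_right gauss_int) simp
  show ?thesis
  proof (rule Bochner_Integration.integrable_bound[OF i])
    show "(\<lambda>x::'a. (1 + norm x + (norm x)\<^sup>2) * exp (K * norm x - a * (norm x)\<^sup>2)) \<in> borel_measurable lborel"
      by measurable
    show "AE x in lborel. norm ((1 + norm x + (norm x)\<^sup>2) * exp (K * norm x - a * (norm x)\<^sup>2))
        \<le> norm (6 * exp (L\<^sup>2 / (2 * a)) * exp (- (a / 2) * (norm (x::'a))\<^sup>2))"
    proof (rule AE_I2)
      fix x :: 'a
      let ?t = "norm x"
      have p: "1 + ?t + ?t\<^sup>2 \<le> 6 * exp ?t" by (rule poly_le_exp) simp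
      have "K * ?t \<le> \<bar>K\<bar> * ?t" by (intro mult_right_mono) auto
      then have "?t + (K * ?t - a * ?t\<^sup>2) \<le> L * ?t - a * ?t\<^sup>2" by (simp add: L_def algebra_simps)
      also have "\<dots> \<le> L\<^sup>2 / (2 * a) - (a / 2) * ?t\<^sup>2" by (rule quad_bound[OF a])
      finally have q: "exp ?t * exp (K * ?t - a * ?t\<^sup>2) \<le> exp (L\<^sup>2 / (2 * a)) * exp (- (a / 2) * ?t\<^sup>2)"
        by (simp add: exp_add[symmetric])
      have "(1 + ?t + ?t\<^sup>2) * exp (K * ?t - a * ?t\<^sup>2) \<le> (6 * exp ?t) * exp (K * ?t - a * ?t\<^sup>2)"
        using p by (intro mult_right_mono) auto
      also have "\<dots> \<le> 6 * (exp (L\<^sup>2 / (2 * a)) * exp (- (a / 2) * ?t\<^sup>2))"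
        using q by simp
      finally show "norm ((1 + ?t + ?t\<^sup>2) * exp (K * ?t - a * ?t\<^sup>2))
        \<le> norm (6 * exp (L\<^sup>2 / (2 * a)) * exp (- (a / 2) * ?t\<^sup>2))"
        by (simp add: abs_mult)
    qed
  qed
qed

lemma pos_integral:
  fixes f :: "'a::euclidean_space \<Rightarrow> real"
  assumes f: "integrable lborel f" and pos: "\<And>x. f x > 0"
  shows "integral\<^sup>L lborel f > 0"
proof -
  have "integral\<^sup>L lborel f \<ge> 0" using pos by (simp add: less_imp_le)
  moreover have "integral\<^sup>L lborel f \<noteq> 0"
  proof
    assume "integral\<^sup>L lborel f = 0"
    then have "AE x in lborel. f x = 0"
      using integral_nonneg_eq_0_iff_AE[OF f] pos by (simp add: less_imp_le)
    then have "AE x::'a in lborel. False" using pos by (auto elim: AE_mp simp: less_le)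
    then have "ae_filter (lborel::'a measure) = bot" using trivial_limit_def by blast
    then show False by (simp add: ae_filter_eq_bot_iff)
  qed
  ultimately show ?thesis by simp
qed

lemma KL_abstract:
  fixes g Rb :: "real^'m::finite \<Rightarrow> real" and r :: "'y \<Rightarrow> real^'m \<Rightarrow> real" and yb :: 'y
  assumes a: "a > 0" and K: "K \<ge> 0"
    and gc: "continuous_on UNIV g" and gpos: "\<And>\<theta>. g \<theta> > 0"
    and gb: "\<And>\<theta>. g \<theta> \<le> A * exp (- a * (norm \<theta>)\<^sup>2)"
    and Rbc: "continuous_on UNIV Rb" and Rbl: "\<And>\<theta>. Rb \<theta> \<ge> - K * norm \<theta>"
    and rc: "\<And>y. continuous_on UNIV (r y)" and rl: "\<And>y \<theta>. r y \<theta> \<ge> - K * norm \<theta>"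
    and ru: "\<And>y \<theta>. r y \<theta> \<le> K * (norm \<theta> + (norm \<theta>)\<^sup>2)"
  shows "\<exists>R. \<forall>y. KL (\<lambda>\<theta>. exp (-(Rb \<theta> + r yb \<theta>)) * g \<theta> / (\<integral>\<phi>. exp (-(Rb \<phi> + r yb \<phi>)) * g \<phi> \<partial>lborel))
                   (\<lambda>\<theta>. exp (-(Rb \<theta> + r y \<theta>)) * g \<theta> / (\<integral>\<phi>. exp (-(Rb \<phi> + r y \<phi>)) * g \<phi> \<partial>lborel)) \<le> ereal R"
proof -
  define F where "F y \<theta> = exp (-(Rb \<theta> + r y \<theta>)) * g \<theta>" for y \<theta>
  define Z where "Z y = (\<integral>\<phi>. F y \<phi> \<partial>lborel)" for y
  define E where "E \<theta> = exp (2*K * norm \<theta> - a * (norm \<theta>)\<^sup>2)" for \<theta> :: "real^'m"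
  define P where "P \<theta> = 1 + norm \<theta> + (norm \<theta>)\<^sup>2" for \<theta> :: "real^'m"
  have A: "A > 0" using gpos[of 0] gb[of 0] by simp
  have P1: "P \<theta> \<ge> 1" for \<theta> unfolding P_def by simp
  have Epos: "E \<theta> > 0" for \<theta> unfolding E_def by simp
  have PE: "integrable lborel (\<lambda>\<theta>. P \<theta> * E \<theta>)" unfolding P_def E_def by (rule dom_int[OF a])
  have Em: "E \<in> borel_measurable lborel" unfolding E_def by measurable
  have Eint: "integrable lborel E"
  proof (rule Bochner_Integration.integrable_bound[OF PE Em], rule AE_I2)
    fix \<theta> show "norm (E \<theta>) \<le> norm (P \<theta> * E \<theta>)"
      using P1[of \<theta>] Epos[of \<theta>] by (simp add: abs_mult)
  qed
  have Fc: "continuous_on UNIV (F y)" for y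
    unfolding F_def by (intro continuous_intros rc Rbc gc)
  have Fm: "F y \<in> borel_measurable lborel" for y
    using borel_measurable_continuous_onI[OF Fc[of y]] by simp
  have Fpos: "F y \<theta> > 0" for y \<theta> unfolding F_def using gpos[of \<theta>] by simp
  have Fle: "F y \<theta> \<le> A * E \<theta>" for y \<theta>
  proof -
    have "-(Rb \<theta> + r y \<theta>) \<le> 2*K*norm \<theta>" using Rbl[of \<theta>] rl[where y=y and \<theta>=\<theta>] by simp
    then have "exp (-(Rb \<theta> + r y \<theta>)) \<le> exp (2*K*norm \<theta>)" by simp
    then have "F y \<theta> \<le> exp (2*K*norm \<theta>) * (A * exp (- a * (norm \<theta>)\<^sup>2))"
      unfolding F_def using gb[of \<theta>] gpos[of \<theta>] by (intro mult_mono) auto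
    also have "\<dots> = A * E \<theta>" unfolding E_def by (simp add: exp_diff exp_minus field_simps)
    finally show ?thesis .
  qed
  have AEint: "integrable lborel (\<lambda>\<theta>. A * E \<theta>)" by (intro integrable_mult_right Eint)
  have Fint: "integrable lborel (F y)" for y
  proof (rule Bochner_Integration.integrable_bound[OF AEint Fm], rule AE_I2)
    fix \<theta> show "norm (F y \<theta>) \<le> norm (A * E \<theta>)"
      using Fle[of y \<theta>] Fpos[of y \<theta>] by simp
  qed
  have Zpos: "Z y > 0" for y unfolding Z_def by (rule pos_integral[OF Fint Fpos])
  define ZB where "ZB = A * integral\<^sup>L lborel E"
  have Zle: "Z y \<le> ZB" for y
    unfolding Z_def ZB_def using Fle
    by (subst integral_mult_right_zero[symmetric]) (intro integral_mono Fint AEint, auto)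
  have rabs: "\<bar>r y \<theta>\<bar> \<le> K * P \<theta>" for y \<theta>
    using rl[where y=y and \<theta>=\<theta>] ru[where y=y and \<theta>=\<theta>] K
      mult_nonneg_nonneg[OF K zero_le_power2[of "norm \<theta>"]]
      mult_nonneg_nonneg[OF K norm_ge_zero[of \<theta>]]
      unfolding abs_le_iff P_def distrib_left by linarith
  have PEm: "(\<lambda>\<theta>. P \<theta> * E \<theta>) \<in> borel_measurable lborel" unfolding P_def E_def by measurable
  have KPE: "integrable lborel (\<lambda>\<theta>. A * K * (P \<theta> * E \<theta>))" by (intro integrable_mult_right PE)
  have Frint: "integrable lborel (\<lambda>\<theta>. F y \<theta> * r y' \<theta>)" for y y'
  proof (rule Bochner_Integration.integrable_bound[OF KPE])
    have "continuous_on UNIV (\<lambda>\<theta>. F y \<theta> * r y' \<theta>)" by (intro continuous_intros Fc rc)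
    from borel_measurable_continuous_onI[OF this]
    show "(\<lambda>\<theta>. F y \<theta> * r y' \<theta>) \<in> borel_measurable lborel" by simp
    show "AE \<theta> in lborel. norm (F y \<theta> * r y' \<theta>) \<le> norm (A * K * (P \<theta> * E \<theta>))"
    proof (rule AE_I2)
      fix \<theta>
      have "\<bar>F y \<theta> * r y' \<theta>\<bar> = F y \<theta> * \<bar>r y' \<theta>\<bar>" using Fpos[of y \<theta>] by (simp add: abs_mult)
      also have "\<dots> \<le> (A * E \<theta>) * (K * P \<theta>)"
        using Fle[of y \<theta>] Fpos[of y \<theta>] rabs[of y' \<theta>] by (intro mult_mono) auto
      finally show "norm (F y \<theta> * r y' \<theta>) \<le> norm (A * K * (P \<theta> * E \<theta>))"
        using A K Epos[of \<theta>] P1[of \<theta>] by (simp add: abs_mult algebra_simps)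
    qed
  qed
  define R where "R = (2*K*A*integral\<^sup>L lborel (\<lambda>\<theta>. P \<theta> * E \<theta>)) / Z yb + ln ZB - ln (Z yb)"
  show ?thesis
  proof (intro exI allI)
    fix y
    define c where "c = ln (Z y) - ln (Z yb)"
    define h where "h \<theta> = (F yb \<theta> * r y \<theta> - F yb \<theta> * r yb \<theta>) / Z yb + c * (F yb \<theta> / Z yb)" for \<theta>
    have eq: "(\<lambda>\<theta>. F yb \<theta> / Z yb * ln ((F yb \<theta> / Z yb) / (F y \<theta> / Z y))) = h"
    proof
      fix \<theta>
      have e1: "exp (r y \<theta> - r yb \<theta>) * exp (-(Rb \<theta> + r y \<theta>)) = exp (-(Rb \<theta> + r yb \<theta>))"
        by (subst exp_add[symmetric]) (simp add: algebra_simps)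
      have "F yb \<theta> = exp (r y \<theta> - r yb \<theta>) * F y \<theta>"
        unfolding F_def using e1 by (simp add: mult.assoc[symmetric])
      then have "(F yb \<theta> / Z yb) / (F y \<theta> / Z y) = exp (r y \<theta> - r yb \<theta>) * (Z y / Z yb)"
        using Fpos[of y \<theta>] Zpos[of y] Zpos[of yb] by (simp add: field_simps)
      then have lnq: "ln ((F yb \<theta> / Z yb) / (F y \<theta> / Z y)) = (r y \<theta> - r yb \<theta>) + c"
        using Zpos[of y] Zpos[of yb] by (simp add: ln_mult ln_div c_def)
      show "F yb \<theta> / Z yb * ln ((F yb \<theta> / Z yb) / (F y \<theta> / Z y)) = h \<theta>"
        unfolding lnq h_def using Zpos[of yb] by (simp add: field_simps)
    qed
    have hint: "integrable lborel h"
      unfolding h_def using Frint Fint by auto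
    define h' where "h' \<theta> = (2*K*A) * (P \<theta> * E \<theta>) / Z yb + c * (F yb \<theta> / Z yb)" for \<theta>
    have h'int: "integrable lborel h'"
      unfolding h'_def using PE Fint by auto
    have hle: "h \<theta> \<le> h' \<theta>" for \<theta>
    proof -
      have "F yb \<theta> * r y \<theta> - F yb \<theta> * r yb \<theta> = F yb \<theta> * (r y \<theta> - r yb \<theta>)" by (simp add: algebra_simps)
      also have "\<dots> \<le> F yb \<theta> * (2 * K * P \<theta>)"
        using rabs[of y \<theta>] rabs[of yb \<theta>] Fpos[of yb \<theta>] by (intro mult_left_mono) auto
      also have "\<dots> \<le> (A * E \<theta>) * (2 * K * P \<theta>)"
        using Fle[of yb \<theta>] K P1[of \<theta>] by (intro mult_right_mono) auto
      finally have "(F yb \<theta> * r y \<theta> - F yb \<theta> * r yb \<theta>) / Z yb \<le> (A * E \<theta>) * (2 * K * P \<theta>) / Z yb"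
        using Zpos[of yb] by (simp add: divide_right_mono)
      then show ?thesis unfolding h_def h'_def by (simp add: algebra_simps)
    qed
    have "integral\<^sup>L lborel h \<le> integral\<^sup>L lborel h'" by (intro integral_mono hint h'int hle)
    also have "integral\<^sup>L lborel h' = (2*K*A) * integral\<^sup>L lborel (\<lambda>\<theta>. P \<theta> * E \<theta>) / Z yb + c * (Z yb / Z yb)"
      unfolding h'_def Z_def
      by (simp add: integral_add integral_divide_zero integral_mult_right_zero PE Fint integrable_divide_zero integrable_mult_right)
    also have "\<dots> \<le> R"
    proof -
      have "ln (Z y) \<le> ln ZB" using Zpos[of y] Zle[of y] by simp
      then show ?thesis unfolding R_def c_def using Zpos[of yb] by simp
    qed
    finally have hR: "integral\<^sup>L lborel h \<le> R" .
    show "KL (\<lambda>\<theta>. exp (-(Rb \<theta> + r yb \<theta>)) * g \<theta> / (\<integral>\<phi>. exp (-(Rb \<phi> + r yb \<phi>)) * g \<phi> \<partial>lborel))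
           (\<lambda>\<theta>. exp (-(Rb \<theta> + r y \<theta>)) * g \<theta> / (\<integral>\<phi>. exp (-(Rb \<phi> + r y \<phi>)) * g \<phi> \<partial>lborel)) \<le> ereal R"
      unfolding KL_def F_def[symmetric] Z_def[symmetric] eq using hint hR by simp
  qed
qed

lemma posdef_quad_lower:
  fixes \<Sigma> :: "real^'m::finite^'m"
  assumes pd: "pos_def \<Sigma>"
  shows "\<exists>m>0. \<forall>v. v \<bullet> (matrix_inv \<Sigma> *v v) \<ge> m * (norm v)\<^sup>2"
proof -
  define S where "S = matrix_inv \<Sigma>"
  have pos: "v \<noteq> 0 \<Longrightarrow> v \<bullet> (\<Sigma> *v v) > 0" for v using pd unfolding pos_def_def by auto
  have "\<forall>x. \<Sigma> *v x = 0 \<longrightarrow> x = 0"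
  proof (intro allI impI)
    fix x assume "\<Sigma> *v x = 0"
    then show "x = 0" using pos[of x] by (cases "x = 0") auto
  qed
  then have inv: "invertible \<Sigma>"
    using invertible_left_inverse matrix_left_invertible_ker by blast
  then have "\<Sigma> ** S = mat 1 \<and> S ** \<Sigma> = mat 1"
    unfolding S_def matrix_inv_def invertible_def by (rule someI_ex)
  then have SigS: "\<Sigma> *v (S *v v) = v" for v by (simp add: matrix_vector_mul_assoc)
  define Q where "Q v = v \<bullet> (S *v v)" for v :: "real^'m"
  have Qpos: "v \<noteq> 0 \<Longrightarrow> Q v > 0" for v
  proof -
    assume v: "v \<noteq> 0"
    define u where "u = S *v v"
    have vu: "v = \<Sigma> *v u" unfolding u_def using SigS by simp
    have "u \<noteq> 0" using v vu by auto
    then have "u \<bullet> (\<Sigma> *v u) > 0" by (rule pos)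
    then show "Q v > 0" unfolding Q_def u_def[symmetric] by (subst vu) (simp add: inner_commute)
  qed
  have Qc: "continuous_on UNIV Q" unfolding Q_def by (intro continuous_intros)
  have ne: "sphere (0::real^'m) 1 \<noteq> {}" using norm_axis_1[of undefined] by auto
  obtain x where x: "x \<in> sphere (0::real^'m) 1" and xmin: "\<forall>y\<in>sphere 0 1. Q x \<le> Q y"
    using continuous_attains_inf[OF compact_sphere ne continuous_on_subset[OF Qc]] by blast
  have "x \<noteq> 0" using x by auto
  then have m: "Q x > 0" by (rule Qpos)
  have Qscale: "Q (c *\<^sub>R v) = c\<^sup>2 * Q v" for c v
    unfolding Q_def by (simp add: matrix_vector_mult_scaleR power2_eq_square)
  show ?thesis
  proof (intro exI conjI allI)
    show "Q x > 0" by (rule m)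
    fix v :: "real^'m"
    show "v \<bullet> (matrix_inv \<Sigma> *v v) \<ge> Q x * (norm v)\<^sup>2"
    proof (cases "v = 0")
      case True then show ?thesis by simp
    next
      case False
      define u where "u = (1 / norm v) *\<^sub>R v"
      have u: "u \<in> sphere 0 1" using False by (simp add: u_def)
      have "v = norm v *\<^sub>R u" using False by (simp add: u_def)
      then have "Q v = (norm v)\<^sup>2 * Q u" using Qscale by metis
      moreover have "Q x \<le> Q u" using xmin u by blast
      ultimately have "Q x * (norm v)\<^sup>2 \<le> Q v" by (simp add: mult.commute[of "(norm v)\<^sup>2"] mult_right_mono)
      then show ?thesis unfolding Q_def S_def .
    qed
  qed
qed

lemma gauss_bound:
  fixes \<Sigma> :: "real^'m::finite^'m"
  assumes pd: "pos_def \<Sigma>"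
  shows "\<exists>a A. a > 0 \<and> (\<forall>\<theta>. gauss_unnorm \<mu> \<Sigma> \<theta> \<le> A * exp (- a * (norm \<theta>)\<^sup>2))"
proof -
  obtain m where m: "m > 0" and q: "\<And>v. v \<bullet> (matrix_inv \<Sigma> *v v) \<ge> m * (norm v)\<^sup>2"
    using posdef_quad_lower[OF pd] by blast
  show ?thesis
  proof (intro exI conjI allI)
    show "m / 4 > 0" using m by simp
    fix \<theta> :: "real^'m"
    have t: "norm \<theta> \<le> norm (\<theta> - \<mu>) + norm \<mu>" using norm_triangle_ineq[of "\<theta> - \<mu>" \<mu>] by simp
    have "(norm \<theta>)\<^sup>2 \<le> (norm (\<theta> - \<mu>) + norm \<mu>)\<^sup>2" using t by (intro power_mono) auto
    also have "\<dots> \<le> 2 * (norm (\<theta> - \<mu>))\<^sup>2 + 2 * (norm \<mu>)\<^sup>2"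
      using zero_le_power2[of "norm (\<theta> - \<mu>) - norm \<mu>"] by (simp add: power2_eq_square algebra_simps)
    finally have n2: "(norm \<theta>)\<^sup>2 \<le> 2 * (norm (\<theta> - \<mu>))\<^sup>2 + 2 * (norm \<mu>)\<^sup>2" .
    have "-(1/2) * ((\<theta> - \<mu>) \<bullet> (matrix_inv \<Sigma> *v (\<theta> - \<mu>))) \<le> -(1/2) * (m * (norm (\<theta> - \<mu>))\<^sup>2)"
      using q[of "\<theta> - \<mu>"] by simp
    also have "\<dots> \<le> m/2 * (norm \<mu>)\<^sup>2 + (- (m/4) * (norm \<theta>)\<^sup>2)"
      using mult_left_mono[OF n2, of m] m by (simp add: algebra_simps)
    finally show "gauss_unnorm \<mu> \<Sigma> \<theta> \<le> exp (m/2 * (norm \<mu>)\<^sup>2) * exp (- (m/4) * (norm \<theta>)\<^sup>2)"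
      unfolding gauss_unnorm_def by (simp add: exp_add[symmetric])
  qed
qed

lemma pd_has:
  fixes f :: "real^'n::finite \<Rightarrow> real"
  assumes "f differentiable at x"
  shows "((\<lambda>t. f (x + t *\<^sub>R axis j 1)) has_real_derivative pd j f x) (at 0)"
proof -
  have g: "(\<lambda>t::real. x + t *\<^sub>R axis j 1) differentiable at 0"
    by (intro derivative_intros)
  have "(\<lambda>t. f (x + t *\<^sub>R axis j 1)) differentiable at 0"
    using differentiable_compose[of f "\<lambda>t. x + t *\<^sub>R axis j 1" 0 UNIV] assms g by simp
  then show ?thesis unfolding pd_def using DERIV_deriv_iff_real_differentiable by blast
qed

lemma pd_eq:
  fixes f :: "real^'n::finite \<Rightarrow> real"
  assumes "((\<lambda>t. f (x + t *\<^sub>R axis j 1)) has_real_derivative D) (at 0)"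
  shows "pd j f x = D"
  unfolding pd_def using assms by (rule DERIV_imp_deriv)

lemma pd_lin:
  fixes f :: "'k::finite \<Rightarrow> real^'n::finite \<Rightarrow> real" and g :: "real^'n \<Rightarrow> real"
  assumes "\<And>k. f k differentiable at x" "g differentiable at x"
  shows "pd j (\<lambda>x. (\<Sum>k\<in>UNIV. c k * f k x) + g x + d) x = (\<Sum>k\<in>UNIV. c k * pd j (f k) x) + pd j g x"
proof (rule pd_eq)
  show "((\<lambda>t. (\<Sum>k\<in>UNIV. c k * f k (x + t *\<^sub>R axis j 1)) + g (x + t *\<^sub>R axis j 1) + d)
      has_real_derivative (\<Sum>k\<in>UNIV. c k * pd j (f k) x) + pd j g x) (at 0)"
    using assms by (auto intro!: derivative_eq_intros pd_has simp: mult.commute)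
qed

definition UU :: "(real^'n::finite \<Rightarrow> real^'m::finite) \<Rightarrow> real^'n \<Rightarrow> real^'m \<Rightarrow> real^'n" where
  "UU T z \<theta> = (\<chi> j. \<Sum>k\<in>UNIV. \<theta>$k * pd j (\<lambda>x. T x $ k) z)"

definition HS :: "(real^'n::finite \<Rightarrow> real^'m::finite) \<Rightarrow> real^'n \<Rightarrow> real^'m \<Rightarrow> real" where
  "HS T z \<theta> = (\<Sum>k\<in>UNIV. \<theta>$k * (\<Sum>j\<in>UNIV. pd j (pd j (\<lambda>x. T x $ k)) z))"

definition rr :: "(real^'n::finite \<Rightarrow> real) \<Rightarrow> (real^'n \<Rightarrow> real^'m::finite) \<Rightarrow> (real^'n \<Rightarrow> real) \<Rightarrow> real^'n \<Rightarrow> real^'m \<Rightarrow> real" where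
  "rr w T b z \<theta> = (w z)\<^sup>2 * ((norm (UU T z \<theta>))\<^sup>2 + 2 * (UU T z \<theta> \<bullet> grad b z))
     + 2 * (grad (\<lambda>x. (w x)\<^sup>2) z \<bullet> UU T z \<theta>) + 2 * (w z)\<^sup>2 * HS T z \<theta>"

definition ell :: "(real^'n::finite \<Rightarrow> real) \<Rightarrow> (real^'m::finite \<Rightarrow> real^'n \<Rightarrow> real) \<Rightarrow> real^'n \<Rightarrow> real^'m \<Rightarrow> real" where
  "ell w q z \<theta> = (w z)\<^sup>2 * (norm (grad (\<lambda>x. ln (q \<theta> x)) z))\<^sup>2
    + 2 * (grad (\<lambda>x. (w x)\<^sup>2) z \<bullet> grad (\<lambda>x. ln (q \<theta> x)) z)
    + 2 * (w z)\<^sup>2 * lap (\<lambda>x. ln (q \<theta> x)) z"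

lemma L_NSM_ell: "L_NSM w q n ys \<theta> = (1 / real n) * (\<Sum>i=1..n. ell w q (ys i) \<theta>)"
  by (simp add: L_NSM_def ell_def)

lemma ell_decomp:
  fixes T :: "real^'n::finite \<Rightarrow> real^'m::finite" and b :: "real^'n \<Rightarrow> real" and w :: "real^'n \<Rightarrow> real"
  assumes T_C2: "twice_differentiable_vec T" and b_C2: "twice_differentiable b"
    and qd: "\<forall>\<theta>. integrable lborel (\<lambda>x. exp (T x \<bullet> \<theta> + b x))"
  shows "ell w (expfam T b) z \<theta> = ell w (expfam T b) z 0 + rr w T b z \<theta>"
proof -
  have Td: "\<And>k x. (\<lambda>x. T x $ k) differentiable at x" and Tdd: "\<And>k j x. pd j (\<lambda>x. T x $ k) differentiable at x"
    using T_C2 unfolding twice_differentiable_vec_def twice_differentiable_def by auto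
  have bd: "\<And>x. b differentiable at x" and bdd: "\<And>j x. pd j b differentiable at x"
    using b_C2 unfolding twice_differentiable_def by auto
  define LQ where "LQ \<theta> = (\<lambda>x. (\<Sum>k\<in>UNIV. \<theta>$k * T x $ k) + b x + (- ln (\<integral>y. exp (T y \<bullet> \<theta> + b y) \<partial>lborel)))"
    for \<theta> :: "real^'m"
  have lnq: "(\<lambda>x. ln (expfam T b \<theta> x)) = LQ \<theta>" for \<theta>
  proof
    fix x
    have Zp: "(\<integral>y. exp (T y \<bullet> \<theta> + b y) \<partial>lborel) > 0"
      using qd by (intro pos_integral) auto
    show "ln (expfam T b \<theta> x) = LQ \<theta> x"
      unfolding expfam_def LQ_def using Zp by (simp add: ln_div inner_vec_def mult.commute)
  qed
  have pdLQ: "pd j (LQ \<theta>) x = (\<Sum>k\<in>UNIV. \<theta>$k * pd j (\<lambda>x. T x $ k) x) + pd j b x" for j x \<theta>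
    unfolding LQ_def by (rule pd_lin[of "\<lambda>k x. T x $ k" x b j "\<lambda>k. \<theta>$k" "- ln (\<integral>y. exp (T y \<bullet> \<theta> + b y) \<partial>lborel)", OF Td bd])
  have pdLQ': "pd j (LQ \<theta>) = (\<lambda>x. (\<Sum>k\<in>UNIV. \<theta>$k * pd j (\<lambda>x. T x $ k) x) + pd j b x + 0)" for j \<theta>
    using pdLQ by auto
  have pdpdLQ: "pd j (pd j (LQ \<theta>)) z = (\<Sum>k\<in>UNIV. \<theta>$k * pd j (pd j (\<lambda>x. T x $ k)) z) + pd j (pd j b) z" for j \<theta>
    unfolding pdLQ'
    using pd_lin[of "\<lambda>k x. pd j (\<lambda>x. T x $ k) x" z "pd j b" j "\<lambda>k. \<theta>$k" 0] Tdd bdd by simp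
  have gradq: "grad (\<lambda>x. ln (expfam T b \<theta> x)) z = UU T z \<theta> + grad b z" for \<theta>
    unfolding lnq grad_def UU_def by (simp add: pdLQ vec_eq_iff)
  have lapq: "lap (\<lambda>x. ln (expfam T b \<theta> x)) z = HS T z \<theta> + lap b z" for \<theta>
  proof -
    have "lap (LQ \<theta>) z = (\<Sum>j\<in>UNIV. \<Sum>k\<in>UNIV. \<theta>$k * pd j (pd j (\<lambda>x. T x $ k)) z) + lap b z"
      unfolding lap_def pdpdLQ by (simp add: sum.distrib)
    also have "(\<Sum>j\<in>UNIV. \<Sum>k\<in>UNIV. \<theta>$k * pd j (pd j (\<lambda>x. T x $ k)) z)
        = (\<Sum>k\<in>UNIV. \<Sum>j\<in>UNIV. \<theta>$k * pd j (pd j (\<lambda>x. T x $ k)) z)"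
      by (rule sum.swap)
    also have "\<dots> = HS T z \<theta>" unfolding HS_def by (simp add: sum_distrib_left)
    finally show ?thesis unfolding lnq .
  qed
  have U0: "UU T z 0 = 0" by (simp add: UU_def vec_eq_iff)
  have H0: "HS T z 0 = 0" by (simp add: HS_def)
  have sq: "(norm (u + v))\<^sup>2 = (norm u)\<^sup>2 + 2 * (u \<bullet> v) + (norm v)\<^sup>2" for u v :: "real^'n"
    by (simp add: power2_norm_eq_inner inner_add_left inner_add_right inner_commute)
  show ?thesis
    unfolding ell_def gradq lapq U0 H0 rr_def sq
    by (simp add: algebra_simps)
qed

lemma dsum_bound:
  fixes f :: "'a::finite \<Rightarrow> 'b::finite \<Rightarrow> real"
  assumes "\<And>i j. \<bar>f i j\<bar> \<le> B"
  shows "\<bar>\<Sum>i\<in>UNIV. \<Sum>j\<in>UNIV. f i j\<bar> \<le> real CARD('a) * real CARD('b) * B"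
proof -
  have "\<bar>\<Sum>i\<in>UNIV. \<Sum>j\<in>UNIV. f i j\<bar> \<le> (\<Sum>i\<in>UNIV. \<bar>\<Sum>j\<in>UNIV. f i j\<bar>)" by (rule sum_abs)
  also have "\<dots> \<le> (\<Sum>i\<in>UNIV. \<Sum>j\<in>UNIV. \<bar>f i j\<bar>)" by (intro sum_mono sum_abs)
  also have "\<dots> \<le> (\<Sum>i\<in>(UNIV::'a set). \<Sum>j\<in>(UNIV::'b set). B)" by (intro sum_mono assms)
  also have "\<dots> = real CARD('a) * real CARD('b) * B" by simp
  finally show ?thesis .
qed

lemma jac_comp: "\<bar>pd j (\<lambda>x. T x $ k) z\<bar> \<le> norm (jac T z)"
proof -
  have "pd j (\<lambda>x. T x $ k) z = jac T z $ k $ j" by (simp add: jac_def)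
  also have "\<bar>\<dots>\<bar> \<le> norm (jac T z $ k)" by (rule component_le_norm_cart[of "jac T z $ k" j, simplified])
  also have "\<dots> \<le> norm (jac T z)" by (rule Finite_Cartesian_Product.norm_nth_le)
  finally show ?thesis .
qed

lemma hess_comp: "\<bar>pd j (pd j (\<lambda>x. T x $ k)) z\<bar> \<le> norm (hess_arr T z)"
proof -
  have "pd j (pd j (\<lambda>x. T x $ k)) z = hess_arr T z $ k $ j $ j" by (simp add: hess_arr_def)
  also have "\<bar>\<dots>\<bar> \<le> norm (hess_arr T z $ k $ j)" by (rule component_le_norm_cart[of "hess_arr T z $ k $ j" j, simplified])
  also have "\<dots> \<le> norm (hess_arr T z $ k)" by (rule Finite_Cartesian_Product.norm_nth_le)
  also have "\<dots> \<le> norm (hess_arr T z)" by (rule Finite_Cartesian_Product.norm_nth_le)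
  finally show ?thesis .
qed

lemma theta_comp: "\<bar>(\<theta>::real^'m::finite) $ k\<bar> \<le> norm \<theta>"
  by (rule component_le_norm_cart[of \<theta> k, simplified])

abbreviation DD :: "'n::finite itself \<Rightarrow> 'm::finite itself \<Rightarrow> real" where
  "DD _ _ \<equiv> real CARD('n) * real CARD('m)"

lemma hb1:
  fixes T :: "real^'n::finite \<Rightarrow> real^'m::finite"
  shows "\<bar>UU T z \<theta> \<bullet> v\<bar> \<le> real CARD('n) * real CARD('m) * (norm \<theta> * norm (jac T z) * norm v)"
proof -
  have "UU T z \<theta> \<bullet> v = (\<Sum>j\<in>UNIV. \<Sum>k\<in>UNIV. \<theta>$k * pd j (\<lambda>x. T x $ k) z * v$j)"
    by (simp add: UU_def inner_vec_def sum_distrib_right)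
  also have "\<bar>\<dots>\<bar> \<le> real CARD('n) * real CARD('m) * (norm \<theta> * norm (jac T z) * norm v)"
  proof (rule dsum_bound)
    fix j k
    show "\<bar>\<theta>$k * pd j (\<lambda>x. T x $ k) z * v$j\<bar> \<le> norm \<theta> * norm (jac T z) * norm v"
      unfolding abs_mult
      by (intro mult_mono theta_comp jac_comp component_le_norm_cart[of v j, simplified]) auto
  qed
  finally show ?thesis .
qed

lemma hb2:
  fixes T :: "real^'n::finite \<Rightarrow> real^'m::finite"
  shows "norm (UU T z \<theta>) \<le> real CARD('n) * real CARD('m) * (norm \<theta> * norm (jac T z))"
proof -
  have "norm (UU T z \<theta>) \<le> (\<Sum>j\<in>UNIV. \<bar>UU T z \<theta> $ j\<bar>)" by (rule norm_le_l1_cart)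
  also have "\<dots> \<le> (\<Sum>j\<in>(UNIV::'n set). real CARD('m) * (norm \<theta> * norm (jac T z)))"
  proof (rule sum_mono)
    fix j :: 'n
    have "\<bar>UU T z \<theta> $ j\<bar> = \<bar>\<Sum>k\<in>UNIV. \<theta>$k * pd j (\<lambda>x. T x $ k) z\<bar>" by (simp add: UU_def)
    also have "\<dots> \<le> (\<Sum>k\<in>UNIV. \<bar>\<theta>$k * pd j (\<lambda>x. T x $ k) z\<bar>)" by (rule sum_abs)
    also have "\<dots> \<le> (\<Sum>k\<in>(UNIV::'m set). norm \<theta> * norm (jac T z))"
      by (intro sum_mono, unfold abs_mult, intro mult_mono theta_comp jac_comp) auto
    finally show "\<bar>UU T z \<theta> $ j\<bar> \<le> real CARD('m) * (norm \<theta> * norm (jac T z))" by simp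
  qed
  also have "\<dots> = real CARD('n) * real CARD('m) * (norm \<theta> * norm (jac T z))" by simp
  finally show ?thesis .
qed

lemma hb3:
  fixes T :: "real^'n::finite \<Rightarrow> real^'m::finite"
  shows "\<bar>HS T z \<theta>\<bar> \<le> real CARD('m) * real CARD('n) * (norm \<theta> * norm (hess_arr T z))"
proof -
  have "HS T z \<theta> = (\<Sum>k\<in>UNIV. \<Sum>j\<in>UNIV. \<theta>$k * pd j (pd j (\<lambda>x. T x $ k)) z)"
    by (simp add: HS_def sum_distrib_left)
  also have "\<bar>\<dots>\<bar> \<le> real CARD('m) * real CARD('n) * (norm \<theta> * norm (hess_arr T z))"
  proof (rule dsum_bound)
    fix j k
    show "\<bar>\<theta>$k * pd j (pd j (\<lambda>x. T x $ k)) z\<bar> \<le> norm \<theta> * norm (hess_arr T z)"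
      unfolding abs_mult by (intro mult_mono theta_comp hess_comp) auto
  qed
  finally show ?thesis .
qed

lemma rr_cont: "continuous_on UNIV (rr w T b z)"
  unfolding rr_def UU_def HS_def by (intro continuous_intros)

lemma rr_bounds:
  fixes T :: "real^'n::finite \<Rightarrow> real^'m::finite" and w b :: "real^'n \<Rightarrow> real"
  assumes w_nonneg: "\<forall>x. w x \<ge> 0" and C: "C \<ge> 0" and C': "C' \<ge> 0"
    and A5a: "\<forall>x. w x * max (sqrt (norm (jac T x) * norm (grad b x)))
                          (max (sqrt (norm (hess_arr T x))) (norm (jac T x))) \<le> C"
    and A5b: "\<forall>x. norm (jac T x) * norm (grad (\<lambda>y. (w y)^2) x) \<le> C'"
    and D: "D = real CARD('n) * real CARD('m)"
    and K0: "K0 = 4*D*C\<^sup>2 + 2*D*C' + D\<^sup>2*C\<^sup>2"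
  shows "rr w T b z \<theta> \<ge> - K0 * norm \<theta> \<and> rr w T b z \<theta> \<le> K0 * (norm \<theta> + (norm \<theta>)\<^sup>2)"
proof -
  define W where "W = w z"
  define nJ where "nJ = norm (jac T z)"
  define nb where "nb = norm (grad b z)"
  define nH where "nH = norm (hess_arr T z)"
  define nw where "nw = norm (grad (\<lambda>y. (w y)^2) z)"
  define t where "t = norm \<theta>"
  define U where "U = UU T z \<theta>"
  have W0: "W \<ge> 0" using w_nonneg by (simp add: W_def)
  have t0: "t \<ge> 0" by (simp add: t_def)
  have D0: "D \<ge> 0" by (simp add: D)
  have nJ0: "nJ \<ge> 0" and nb0: "nb \<ge> 0" and nH0: "nH \<ge> 0" and nw0: "nw \<ge> 0"
    by (simp_all add: nJ_def nb_def nH_def nw_def)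
  have amax: "W * max (sqrt (nJ * nb)) (max (sqrt nH) nJ) \<le> C"
    using A5a unfolding W_def nJ_def nb_def nH_def by blast
  have s1: "W * sqrt (nJ * nb) \<le> C"
    using amax W0 by (meson max.cobounded1 mult_left_mono order_trans)
  have s2: "W * sqrt nH \<le> C"
    using amax W0 by (meson max.cobounded1 max.cobounded2 mult_left_mono order_trans)
  have s3: "W * nJ \<le> C"
    using amax W0 by (meson max.cobounded2 mult_left_mono order_trans)
  have c1: "W\<^sup>2 * (nJ * nb) \<le> C\<^sup>2"
  proof -
    have "(W * sqrt (nJ * nb))\<^sup>2 \<le> C\<^sup>2" using s1 W0 nJ0 nb0 by (intro power_mono) auto
    then show ?thesis using nJ0 nb0 by (simp add: power_mult_distrib)
  qed
  have c2: "W\<^sup>2 * nH \<le> C\<^sup>2"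
  proof -
    have "(W * sqrt nH)\<^sup>2 \<le> C\<^sup>2" using s2 W0 nH0 by (intro power_mono) auto
    then show ?thesis using nH0 by (simp add: power_mult_distrib)
  qed
  have c4: "nJ * nw \<le> C'" using A5b unfolding nJ_def nw_def by blast
  have hU: "norm U \<le> D * (t * nJ)" using hb2[of T z \<theta>] unfolding U_def D t_def nJ_def .
  have hUb: "\<bar>U \<bullet> grad b z\<bar> \<le> D * (t * nJ * nb)" using hb1[of T z \<theta> "grad b z"] unfolding U_def D t_def nJ_def nb_def .
  have hUw: "\<bar>grad (\<lambda>y. (w y)^2) z \<bullet> U\<bar> \<le> D * (t * nJ * nw)"
    using hb1[of T z \<theta> "grad (\<lambda>y. (w y)^2) z"] unfolding U_def D t_def nJ_def nw_def by (simp add: inner_commute)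
  have hH: "\<bar>HS T z \<theta>\<bar> \<le> D * (t * nH)" using hb3[of T z \<theta>] unfolding D t_def nH_def by (simp add: mult.commute)
  define A1 where "A1 = W\<^sup>2 * (norm U)\<^sup>2"
  define A2 where "A2 = W\<^sup>2 * (2 * (U \<bullet> grad b z))"
  define A3 where "A3 = 2 * (grad (\<lambda>y. (w y)^2) z \<bullet> U)"
  define A4 where "A4 = 2 * W\<^sup>2 * HS T z \<theta>"
  have rr_eq: "rr w T b z \<theta> = A1 + A2 + A3 + A4"
    unfolding rr_def A1_def A2_def A3_def A4_def W_def U_def by (simp add: algebra_simps)
  have a1l: "A1 \<ge> 0" by (simp add: A1_def)
  have a1u: "A1 \<le> D\<^sup>2 * C\<^sup>2 * t\<^sup>2"
  proof -
    have "W * norm U \<le> W * (D * (t * nJ))" using hU W0 by (rule mult_left_mono)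
    also have "\<dots> = D * t * (W * nJ)" by (simp add: algebra_simps)
    also have "\<dots> \<le> D * t * C" using s3 D0 t0 by (intro mult_left_mono) auto
    finally have "(W * norm U)\<^sup>2 \<le> (D * t * C)\<^sup>2" using W0 by (intro power_mono) auto
    then show ?thesis unfolding A1_def by (simp add: power_mult_distrib algebra_simps)
  qed
  have a2: "\<bar>A2\<bar> \<le> 2 * D * C\<^sup>2 * t"
  proof -
    have "\<bar>A2\<bar> = 2 * (W\<^sup>2 * \<bar>U \<bullet> grad b z\<bar>)" by (simp add: A2_def abs_mult)
    also have "W\<^sup>2 * \<bar>U \<bullet> grad b z\<bar> \<le> W\<^sup>2 * (D * (t * nJ * nb))" using hUb by (intro mult_left_mono) auto
    also have "\<dots> = D * t * (W\<^sup>2 * (nJ * nb))" by (simp add: algebra_simps)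
    also have "\<dots> \<le> D * t * C\<^sup>2" using c1 D0 t0 by (intro mult_left_mono) auto
    finally show ?thesis by (simp add: algebra_simps)
  qed
  have a3: "\<bar>A3\<bar> \<le> 2 * D * C' * t"
  proof -
    have "\<bar>A3\<bar> = 2 * \<bar>grad (\<lambda>y. (w y)^2) z \<bullet> U\<bar>" by (simp add: A3_def abs_mult)
    also have "\<bar>grad (\<lambda>y. (w y)^2) z \<bullet> U\<bar> \<le> D * t * (nJ * nw)" using hUw by (simp add: algebra_simps)
    also have "\<dots> \<le> D * t * C'" using c4 D0 t0 by (intro mult_left_mono) auto
    finally show ?thesis by (simp add: algebra_simps)
  qed
  have a4: "\<bar>A4\<bar> \<le> 2 * D * C\<^sup>2 * t"
  proof -
    have "\<bar>A4\<bar> = 2 * (W\<^sup>2 * \<bar>HS T z \<theta>\<bar>)" by (simp add: A4_def abs_mult)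
    also have "W\<^sup>2 * \<bar>HS T z \<theta>\<bar> \<le> W\<^sup>2 * (D * (t * nH))" using hH by (intro mult_left_mono) auto
    also have "\<dots> = D * t * (W\<^sup>2 * nH)" by (simp add: algebra_simps)
    also have "\<dots> \<le> D * t * C\<^sup>2" using c2 D0 t0 by (intro mult_left_mono) auto
    finally show ?thesis by (simp add: algebra_simps)
  qed
  have e1: "K0 * t = 4*D*C\<^sup>2*t + 2*D*C'*t + D\<^sup>2*C\<^sup>2*t" by (simp add: K0 algebra_simps)
  have e2: "K0 * (t + t\<^sup>2) = K0 * t + 4*D*C\<^sup>2*t\<^sup>2 + 2*D*C'*t\<^sup>2 + D\<^sup>2*C\<^sup>2*t\<^sup>2" by (simp add: K0 algebra_simps)
  have n1: "D\<^sup>2*C\<^sup>2*t \<ge> 0" using t0 by simp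
  have n2: "4*D*C\<^sup>2*t\<^sup>2 \<ge> 0" using D0 by simp
  have n3: "2*D*C'*t\<^sup>2 \<ge> 0" using D0 C' by simp
  have n4: "4*D*C\<^sup>2*t = 2 * D * C\<^sup>2 * t + 2 * D * C\<^sup>2 * t" by simp
  show ?thesis unfolding rr_eq t_def[symmetric]
    using a1l a1u a2 a3 a4 e1 e2 n1 n2 n3 n4 by (simp only: abs_le_iff) linarith
qed

theorem theorem4p6:
  fixes \<beta> :: real and n j :: nat and xo :: "nat \<Rightarrow> real^'dx"
    and \<mu> :: "real^'dt" and \<Sigma> :: "real^'dt^'dt"
    and w :: "real^'dx \<Rightarrow> real" and T :: "real^'dx \<Rightarrow> real^'dt" and b :: "real^'dx \<Rightarrow> real"
    and C C' :: real
  assumes beta_pos: "\<beta> > 0"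
    and Sigma_pd: "pos_def \<Sigma>"
    and j_range: "j \<in> {1..n}"
    (* A1 *)
    and w_nonneg: "\<forall>x. w x \<ge> 0"
    and w_C2: "twice_cont_differentiable w"
    and w_bdd: "bdd_above (range w)"
    and grad_w_bdd: "bdd_above (range (\<lambda>x. norm (grad w x)))"
    (* A3 *)
    and T_C2: "twice_differentiable_vec T"
    and b_C2: "twice_differentiable b"
    and q_density: "\<forall>\<theta>. integrable lborel (\<lambda>x. exp (T x \<bullet> \<theta> + b x))"
    (* A5 *)
    and C_nonneg: "C \<ge> 0" and C'_nonneg: "C' \<ge> 0"
    and A5a: "\<forall>x. w x * max (sqrt (norm (jac T x) * norm (grad b x)))
                          (max (sqrt (norm (hess_arr T x))) (norm (jac T x))) \<le> C"
    and A5b: "\<forall>x. norm (jac T x) * norm (grad (\<lambda>y. (w y)^2) x) \<le> C'"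
  shows "(SUP xc. KL (post_NSM \<beta> w (expfam T b) \<mu> \<Sigma> n xo)
                     (post_NSM \<beta> w (expfam T b) \<mu> \<Sigma> n (xo(j := xc)))) < \<infinity>"
proof -
  define D where "D = real CARD('dx) * real CARD('dt)"
  define K0 where "K0 = 4*D*C\<^sup>2 + 2*D*C' + D\<^sup>2*C\<^sup>2"
  have D0: "D \<ge> 0" by (simp add: D_def)
  have K00: "K0 \<ge> 0" using D0 C'_nonneg by (simp add: K0_def)
  have rrb: "rr w T b z \<theta> \<ge> - K0 * norm \<theta> \<and> rr w T b z \<theta> \<le> K0 * (norm \<theta> + (norm \<theta>)\<^sup>2)" for z \<theta>
    by (rule rr_bounds[OF w_nonneg C_nonneg C'_nonneg A5a A5b D_def K0_def])
  have dec: "ell w (expfam T b) z \<theta> = ell w (expfam T b) z 0 + rr w T b z \<theta>" for z \<theta>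
    by (rule ell_decomp[OF T_C2 b_C2 q_density])
  have n1: "n \<ge> 1" and jn: "j \<in> {1..n}" using j_range by auto
  define I' where "I' = {1..n} - {j}"
  have cI: "real (card I') \<le> real n" unfolding I'_def using jn by simp
  define Rb where "Rb \<theta> = \<beta> * (\<Sum>i\<in>I'. rr w T b (xo i) \<theta>)" for \<theta>
  define r where "r y \<theta> = \<beta> * rr w T b y \<theta>" for y \<theta>
  define g where "g = gauss_unnorm \<mu> \<Sigma>"
  define K where "K = \<beta> * K0 * real n"
  obtain a A where a: "a > 0" and gb: "\<forall>\<theta>. g \<theta> \<le> A * exp (- a * (norm \<theta>)\<^sup>2)"
    using gauss_bound[OF Sigma_pd, of \<mu>] unfolding g_def by blast
  have K0: "K \<ge> 0" unfolding K_def using beta_pos K00 by simp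
  have mc: "continuous_on UNIV (\<lambda>x. matrix_inv \<Sigma> *v (x - \<mu>))"
    by (rule continuous_on_compose2[OF matrix_vector_mult_linear_continuous_on[of UNIV "matrix_inv \<Sigma>"]])
       (auto intro!: continuous_intros)
  have gc: "continuous_on UNIV g" unfolding g_def gauss_unnorm_def by (intro continuous_intros mc)
  have gpos: "g \<theta> > 0" for \<theta> unfolding g_def gauss_unnorm_def by simp
  have Rbc: "continuous_on UNIV Rb" unfolding Rb_def by (intro continuous_intros rr_cont)
  have rc: "continuous_on UNIV (r y)" for y unfolding r_def by (intro continuous_intros rr_cont)
  have Rbl: "Rb \<theta> \<ge> - K * norm \<theta>" for \<theta>
  proof -
    have "(\<Sum>i\<in>I'. - K0 * norm \<theta>) \<le> (\<Sum>i\<in>I'. rr w T b (xo i) \<theta>)"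
      using rrb by (intro sum_mono) blast
    then have "- (real (card I') * (K0 * norm \<theta>)) \<le> (\<Sum>i\<in>I'. rr w T b (xo i) \<theta>)" by simp
    moreover have "real (card I') * (K0 * norm \<theta>) \<le> real n * (K0 * norm \<theta>)"
      using cI K00 by (intro mult_right_mono) auto
    ultimately have "- (real n * (K0 * norm \<theta>)) \<le> (\<Sum>i\<in>I'. rr w T b (xo i) \<theta>)" by linarith
    then have "\<beta> * (- (real n * (K0 * norm \<theta>))) \<le> Rb \<theta>"
      unfolding Rb_def using beta_pos by (intro mult_left_mono) auto
    then show ?thesis unfolding K_def by (simp add: algebra_simps)
  qed
  have rl: "r y \<theta> \<ge> - K * norm \<theta>" for y \<theta>
  proof -
    have "- (real n * (K0 * norm \<theta>)) \<le> - (K0 * norm \<theta>)"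
      using n1 K00 mult_right_mono[of 1 "real n" "K0 * norm \<theta>"] by simp
    also have "\<dots> \<le> rr w T b y \<theta>" using rrb by simp
    finally have "\<beta> * (- (real n * (K0 * norm \<theta>))) \<le> r y \<theta>"
      unfolding r_def using beta_pos by (intro mult_left_mono) auto
    then show ?thesis unfolding K_def by (simp add: algebra_simps)
  qed
  have ru: "r y \<theta> \<le> K * (norm \<theta> + (norm \<theta>)\<^sup>2)" for y \<theta>
  proof -
    have "rr w T b y \<theta> \<le> K0 * (norm \<theta> + (norm \<theta>)\<^sup>2)" using rrb by simp
    also have "\<dots> \<le> real n * (K0 * (norm \<theta> + (norm \<theta>)\<^sup>2))"
      using n1 K00 mult_right_mono[of 1 "real n" "K0 * (norm \<theta> + (norm \<theta>)\<^sup>2)"] by simp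
    finally have "r y \<theta> \<le> \<beta> * (real n * (K0 * (norm \<theta> + (norm \<theta>)\<^sup>2)))"
      unfolding r_def using beta_pos by (intro mult_left_mono) auto
    then show ?thesis unfolding K_def by (simp add: algebra_simps)
  qed
  obtain R where R: "\<forall>y. KL (\<lambda>\<theta>. exp (-(Rb \<theta> + r (xo j) \<theta>)) * g \<theta> / (\<integral>\<phi>. exp (-(Rb \<phi> + r (xo j) \<phi>)) * g \<phi> \<partial>lborel))
                   (\<lambda>\<theta>. exp (-(Rb \<theta> + r y \<theta>)) * g \<theta> / (\<integral>\<phi>. exp (-(Rb \<phi> + r y \<phi>)) * g \<phi> \<partial>lborel)) \<le> ereal R"
    using KL_abstract[where r=r and yb="xo j" and Rb=Rb and g=g, OF a K0 gc gpos gb[rule_format] Rbc Rbl rc rl ru] by blast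
  have post: "post_NSM \<beta> w (expfam T b) \<mu> \<Sigma> n (xo(j := y)) =
      (\<lambda>\<theta>. exp (-(Rb \<theta> + r y \<theta>)) * g \<theta> / (\<integral>\<phi>. exp (-(Rb \<phi> + r y \<phi>)) * g \<phi> \<partial>lborel))" for y
  proof -
    define ys where "ys = xo(j := y)"
    define c0 where "c0 = (\<Sum>i=1..n. ell w (expfam T b) (ys i) 0)"
    have ex: "exp (- \<beta> * real n * L_NSM w (expfam T b) n ys \<theta>) = exp (- \<beta> * c0) * exp (-(Rb \<theta> + r y \<theta>))" for \<theta>
    proof -
      have "(\<Sum>i=1..n. ell w (expfam T b) (ys i) \<theta>) = c0 + (\<Sum>i=1..n. rr w T b (ys i) \<theta>)"
        unfolding c0_def by (simp add: dec[of _ \<theta>] sum.distrib)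
      also have "(\<Sum>i=1..n. rr w T b (ys i) \<theta>) = rr w T b (ys j) \<theta> + (\<Sum>i\<in>I'. rr w T b (ys i) \<theta>)"
        unfolding I'_def using jn by (simp add: sum.remove)
      also have "(\<Sum>i\<in>I'. rr w T b (ys i) \<theta>) = (\<Sum>i\<in>I'. rr w T b (xo i) \<theta>)"
        unfolding I'_def ys_def by (intro sum.cong) auto
      finally have "(\<Sum>i=1..n. ell w (expfam T b) (ys i) \<theta>) = c0 + rr w T b y \<theta> + (\<Sum>i\<in>I'. rr w T b (xo i) \<theta>)"
        by (simp add: ys_def)
      then have "- \<beta> * real n * L_NSM w (expfam T b) n ys \<theta> = - \<beta> * c0 + (-(Rb \<theta> + r y \<theta>))"
        unfolding L_NSM_ell Rb_def r_def using n1 by (simp add: algebra_simps)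
      then show ?thesis unfolding mult_exp_exp by simp
    qed
    show ?thesis
    proof
      fix \<theta>
      show "post_NSM \<beta> w (expfam T b) \<mu> \<Sigma> n (xo(j := y)) \<theta> =
        exp (-(Rb \<theta> + r y \<theta>)) * g \<theta> / (\<integral>\<phi>. exp (-(Rb \<phi> + r y \<phi>)) * g \<phi> \<partial>lborel)"
        unfolding post_NSM_def ys_def[symmetric] ex g_def[symmetric]
        by (simp add: mult.assoc)
    qed
  qed
  have post0: "post_NSM \<beta> w (expfam T b) \<mu> \<Sigma> n xo = post_NSM \<beta> w (expfam T b) \<mu> \<Sigma> n (xo(j := xo j))"
    by simp
  have "(SUP xc. KL (post_NSM \<beta> w (expfam T b) \<mu> \<Sigma> n xo)
                     (post_NSM \<beta> w (expfam T b) \<mu> \<Sigma> n (xo(j := xc)))) \<le> ereal R"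
    unfolding post0 post using R by (intro SUP_least) blast
  also have "\<dots> < \<infinity>" by simp
  finally show ?thesis .
qed

end
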